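(* Consider the CDM model with $\tilde{\lambda}_i>z_i>0$ for all $i\in\mathcal{M}$ and nonnegative $\bm{A}$ satisfying $$A_{ii}>\sum_{j\in\mathcal{M}\setminus\{i\}}A_{ij}\quad\text{for all } i\in\mathcal{M}.$$ Then $\bm{A}$ is nonsingular; every $\bm{x}^\ast>\bm{0}$ is the interior equilibrium of the CDM model for a (unique) associated parameter vector $\bm{q}>\bm{0}$; and for any $\bm{q}>\bm{0}$ for which the interior equilibrium $\bm{x}^\ast>\bm{0}$ exists, the corresponding equilibrium $\bm{y}^\ast$ of the age-structured CDM map is locally asymptotically stable, i.e. the Jacobian $\bm{J}^\ast$ of that map at $\bm{y}^\ast$ satisfies $\rho(\bm{J}^\ast)<1$. (The condition does not depend on the delays $\delta_i$.)
   Context: CDM model: $m\ge1$ species $\mathcal{M}=\{1,\dots,m\}$, delays $\delta_i\in\{0,1,\dots\}$, survival probabilities $\sigma_{a\mid i}\in(0,1]$ ($a<\delta_i$), adult survival $\sigma_{\delta_i\mid i}\in(0,1)$, $z_i=1-\sigma_{\delta_i\mid i}$, fecundity $\lambda_i>0$, $\tilde\lambda_i=\lambda_i\prod_{a=0}^{\delta_i-1}\sigma_{a\mid i}$ (empty product $=1$), $\bm{A}\ge\bm{0}$ ($m\times m$), $\bm{q}>\bm{0}$. Per capita growth $G_i(\bm{x})=\lambda_i/(1+q_i^{-1}\sum_{k}A_{ik}x_k)$. Age-structured map $h$ on $\bm{y}=(y_{a\mid i})$, $0\le a\le\delta_i$, with adults $\bm{x}=(y_{\delta_1\mid1},\dots,y_{\delta_m\mid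 m})^\top$: if $\delta_i>0$, $h_{0\mid i}(\bm{y})=G_i(\bm{x})y_{\delta_i\mid i}$, $h_{a\mid i}(\bm{y})=\sigma_{a-1\mid i}y_{a-1\mid i}$ ($1\le a\le\delta_i-1$), $h_{\delta_i\mid i}(\bm{y})=\sigma_{\delta_i-1\mid i}y_{\delta_i-1\mid i}+\sigma_{\delta_i\mid i}y_{\delta_i\mid i}$; if $\delta_i=0$, $h_{0\mid i}(\bm{y})=\sigma_{0\mid i}y_{0\mid i}+G_i(\bm{x})y_{0\mid i}$. Equivalently adults satisfy $x_i(t+1)=\sigma_{\delta_i\mid i}x_i(t)+\tilde\lambda_ix_i(t-\delta_i)/(1+q_i^{-1}\sum_kA_{ik}x_k(t-\delta_i))$. An interior equilibrium is $\bm{x}^\ast>\bm{0}$ satisfying $\bm{A}\bm{x}^\ast=\mathrm{diag}[\bm{\tilde\lambda}-\bm{z}]\mathrm{diag}[\bm{z}]^{-1}\bm{q}$; the full equilibrium $\bm{y}^\ast$ has $y^\ast_{\delta_i\mid i}=x_i^\ast$ and immature classes determined by $h(\bm{y}^\ast)=\bm{y}^\ast$. $\rho$ denotes spectral radius. *)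

theory Defs
  imports "HOL-Analysis.Derivative" "Jordan_Normal_Form.Spectral_Radius"
begin

no_notation Finite_Cartesian_Product.vec_nth (infixl "$" 90)
no_notation Finite_Cartesian_Product.matrix_vector_mult (infixl "*v" 70)

text \<open>Species are indexed by 0..<m. Age classes of species i are a = 0..delta i.
  A state y of the age-structured map assigns to each pair (a, i) the density of
  age class a of species i. sigma a i is the survival probability of age class a of
  species i (sigma (delta i) i is adult survival).\<close>

definition cdm_ltilde :: "(nat \<Rightarrow> nat) \<Rightarrow> (nat \<Rightarrow> nat \<Rightarrow> real) \<Rightarrow> (nat \<Rightarrow> real) \<Rightarrow> nat \<Rightarrow> real" where
  "cdm_ltilde delta sigma lam i = lam i * (\<Prod>a<delta i. sigma a i)"

definition cdm_z :: "(nat \<Rightarrow> nat) \<Rightarrow> (nat \<Rightarrow> nat \<Rightarrow> real) \<Rightarrow> nat \<Rightarrow> real" where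
  "cdm_z delta sigma i = 1 - sigma (delta i) i"

definition cdm_G :: "nat \<Rightarrow> (nat \<Rightarrow> real) \<Rightarrow> real mat \<Rightarrow> real vec \<Rightarrow> nat \<Rightarrow> real vec \<Rightarrow> real" where
  "cdm_G m lam A q i x = lam i / (1 + (\<Sum>k<m. A $$ (i, k) * x $ k) / q $ i)"

definition cdm_adults :: "nat \<Rightarrow> (nat \<Rightarrow> nat) \<Rightarrow> (nat \<times> nat \<Rightarrow> real) \<Rightarrow> real vec" where
  "cdm_adults m delta y = vec m (\<lambda>k. y (delta k, k))"

definition cdm_h :: "nat \<Rightarrow> (nat \<Rightarrow> nat) \<Rightarrow> (nat \<Rightarrow> nat \<Rightarrow> real) \<Rightarrow> (nat \<Rightarrow> real) \<Rightarrow> real mat \<Rightarrow> real vec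
    \<Rightarrow> (nat \<times> nat \<Rightarrow> real) \<Rightarrow> (nat \<times> nat \<Rightarrow> real)" where
  "cdm_h m delta sigma lam A q y = (\<lambda>(a, i).
     (let g = cdm_G m lam A q i (cdm_adults m delta y) in
      if delta i > 0 then
        (if a = 0 then g * y (delta i, i)
         else if a < delta i then sigma (a - 1) i * y (a - 1, i)
         else sigma (delta i - 1) i * y (delta i - 1, i) + sigma (delta i) i * y (delta i, i))
      else sigma 0 i * y (0, i) + g * y (0, i)))"

definition cdm_states :: "nat \<Rightarrow> (nat \<Rightarrow> nat) \<Rightarrow> (nat \<times> nat) list" where
  "cdm_states m delta = concat (map (\<lambda>i. map (\<lambda>a. (a, i)) [0..<Suc (delta i)]) [0..<m])"

definition cdm_jacobian :: "nat \<Rightarrow> (nat \<Rightarrow> nat) \<Rightarrow> (nat \<Rightarrow> nat \<Rightarrow> real) \<Rightarrow> (nat \<Rightarrow> real) \<Rightarrow> real mat \<Rightarrow> real vec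
    \<Rightarrow> (nat \<times> nat \<Rightarrow> real) \<Rightarrow> real mat" where
  "cdm_jacobian m delta sigma lam A q y =
     (let S = cdm_states m delta in
      mat (length S) (length S) (\<lambda>(r, s).
        deriv (\<lambda>t. cdm_h m delta sigma lam A q (y (S ! s := t)) (S ! r)) (y (S ! s))))"

end

theory Submission
  imports Defs
begin



definition indf :: "nat \<times> nat \<Rightarrow> nat \<times> nat \<Rightarrow> real" where
  "indf s p = (if p = s then 1 else 0)"

definition cD :: "nat \<Rightarrow> (nat \<Rightarrow> nat) \<Rightarrow> real mat \<Rightarrow> real vec \<Rightarrow> (nat \<times> nat \<Rightarrow> real) \<Rightarrow> nat \<Rightarrow> real" where
  "cD m delta A q y i = 1 + (\<Sum>k<m. A $$ (i,k) * y (delta k, k)) / q $ i"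

lemma upd_deriv: "((\<lambda>t. (y(s:=t)) p) has_real_derivative indf s p) (at (y s))"
  by (cases "p = s") (auto simp: indf_def)

lemma sum_deriv: "((\<lambda>t. \<Sum>k<m. A $$ (i,k) * cdm_adults m delta (y(s:=t)) $ k)
   has_real_derivative (\<Sum>k<m. A $$ (i,k) * indf s (delta k, k))) (at (y s))"
proof -
  have e: "(\<lambda>t. \<Sum>k<m. A $$ (i,k) * cdm_adults m delta (y(s:=t)) $ k) =
     (\<lambda>t. \<Sum>k<m. A $$ (i,k) * (y(s:=t)) (delta k, k))"
    by (auto simp: cdm_adults_def intro!: sum.cong)
  show ?thesis unfolding e
    by (intro DERIV_sum DERIV_cmult upd_deriv)
qed

lemma G_deriv:
  assumes "cD m delta A q y i \<noteq> 0"
  shows "((\<lambda>t. cdm_G m lam A q i (cdm_adults m delta (y(s:=t))))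
   has_real_derivative (- lam i * ((\<Sum>k<m. A $$ (i,k) * indf s (delta k, k)) / q $ i) / (cD m delta A q y i)^2)) (at (y s))"
proof -
  let ?S = "\<lambda>t. \<Sum>k<m. A $$ (i,k) * cdm_adults m delta (y(s:=t)) $ k"
  let ?Sd = "\<Sum>k<m. A $$ (i,k) * indf s (delta k, k)"
  have e: "?S (y s) = (\<Sum>k<m. A $$ (i,k) * y (delta k, k))"
    by (auto simp: cdm_adults_def intro!: sum.cong)
  have e2: "(\<Sum>k<m. A $$ (i,k) * cdm_adults m delta y $ k) = (\<Sum>k<m. A $$ (i,k) * y (delta k, k))"
    by (auto simp: cdm_adults_def intro!: sum.cong)
  have h1: "((\<lambda>t. 1 + ?S t / q$i) has_real_derivative (0 + ?Sd / q$i)) (at (y s))"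
    by (intro DERIV_add DERIV_const DERIV_cdivide sum_deriv)
  have h2: "((\<lambda>t. lam i / (1 + ?S t / q$i)) has_real_derivative
      (0 * (1 + ?S (y s) / q$i) - lam i * (0 + ?Sd / q$i)) / ((1 + ?S (y s) / q$i) * (1 + ?S (y s) / q$i))) (at (y s))"
    apply (rule DERIV_divide[OF DERIV_const h1])
    using assms by (simp add: e e2 cD_def)
  show ?thesis unfolding cdm_G_def using h2 by (simp add: e e2 cD_def power2_eq_square)
qed

definition cJac :: "nat \<Rightarrow> (nat \<Rightarrow> nat) \<Rightarrow> (nat \<Rightarrow> nat \<Rightarrow> real) \<Rightarrow> (nat \<Rightarrow> real) \<Rightarrow> real mat \<Rightarrow> real vec
    \<Rightarrow> (nat \<times> nat \<Rightarrow> real) \<Rightarrow> nat \<times> nat \<Rightarrow> nat \<times> nat \<Rightarrow> real" where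
  "cJac m delta sigma lam A q y r s = (case r of (a, i) \<Rightarrow>
     (let g = cdm_G m lam A q i (cdm_adults m delta y);
          dg = - lam i * ((\<Sum>k<m. A $$ (i,k) * indf s (delta k, k)) / q $ i) / (cD m delta A q y i)^2 in
      if delta i > 0 then
        (if a = 0 then dg * y (delta i, i) + g * indf s (delta i, i)
         else if a < delta i then sigma (a - 1) i * indf s (a - 1, i)
         else sigma (delta i - 1) i * indf s (delta i - 1, i) + sigma (delta i) i * indf s (delta i, i))
      else sigma 0 i * indf s (0, i) + (dg * y (0, i) + g * indf s (0, i))))"

lemma h_deriv:
  assumes "cD m delta A q y i \<noteq> 0"
  shows "((\<lambda>t. cdm_h m delta sigma lam A q (y(s:=t)) (a, i)) has_real_derivative
     cJac m delta sigma lam A q y (a, i) s) (at (y s))"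
proof -
  note G = G_deriv[OF assms, of lam s]
  show ?thesis
  proof (cases "delta i > 0")
    case True
    show ?thesis
    proof (cases "a = 0")
      case a0: True
      have "((\<lambda>t. cdm_G m lam A q i (cdm_adults m delta (y(s:=t))) * (y(s:=t)) (delta i, i)) has_real_derivative
         cJac m delta sigma lam A q y (a, i) s) (at (y s))"
        using DERIV_mult[OF G upd_deriv[of y s "(delta i, i)"]] True a0
        by (simp add: cJac_def Let_def ac_simps)
      then show ?thesis using True a0 by (simp add: cdm_h_def Let_def)
    next
      case a1: False
      show ?thesis
      proof (cases "a < delta i")
        case True
        have "((\<lambda>t. sigma (a - 1) i * (y(s:=t)) (a - 1, i)) has_real_derivative
           cJac m delta sigma lam A q y (a, i) s) (at (y s))"
          using DERIV_cmult[OF upd_deriv[of y s "(a - 1, i)"], of "sigma (a - 1) i"] True a1 \<open>delta i > 0\<close>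
          by (simp add: cJac_def Let_def)
        then show ?thesis using True a1 \<open>delta i > 0\<close> by (simp add: cdm_h_def Let_def)
      next
        case False
        have "((\<lambda>t. sigma (delta i - 1) i * (y(s:=t)) (delta i - 1, i) + sigma (delta i) i * (y(s:=t)) (delta i, i)) has_real_derivative
           cJac m delta sigma lam A q y (a, i) s) (at (y s))"
          using DERIV_add[OF DERIV_cmult[OF upd_deriv[of y s "(delta i - 1, i)"], of "sigma (delta i - 1) i"]
               DERIV_cmult[OF upd_deriv[of y s "(delta i, i)"], of "sigma (delta i) i"]] False a1 \<open>delta i > 0\<close>
          by (simp add: cJac_def Let_def)
        then show ?thesis using False a1 \<open>delta i > 0\<close> by (simp add: cdm_h_def Let_def)
      qed
    qed
  next
    case False
    have "((\<lambda>t. sigma 0 i * (y(s:=t)) (0, i) + cdm_G m lam A q i (cdm_adults m delta (y(s:=t))) * (y(s:=t)) (0, i)) has_real_derivative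
         cJac m delta sigma lam A q y (a, i) s) (at (y s))"
      using DERIV_add[OF DERIV_cmult[OF upd_deriv[of y s "(0, i)"], of "sigma 0 i"] DERIV_mult[OF G upd_deriv[of y s "(0, i)"]]] False
      by (simp add: cJac_def Let_def ac_simps)
    then show ?thesis using False by (simp add: cdm_h_def Let_def)
  qed
qed




lemma mem_states: "(p \<in> set (cdm_states m delta)) = (snd p < m \<and> fst p \<le> delta (snd p))"
  by (cases p) (force simp: cdm_states_def simp del: upt_Suc)

lemma distinct_states: "distinct (cdm_states m delta)"
  unfolding cdm_states_def
proof (rule distinct_concat)
  show "distinct (map (\<lambda>i. map (\<lambda>a. (a, i)) [0..<Suc (delta i)]) [0..<m])"
    unfolding distinct_map
  proof
    show "inj_on (\<lambda>i. map (\<lambda>a. (a, i)) [0..<Suc (delta i)]) (set [0..<m])"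
    proof (rule inj_onI)
      fix i j assume "map (\<lambda>a. (a, i)) [0..<Suc (delta i)] = map (\<lambda>a. (a, j)) [0..<Suc (delta j)]"
      then have "hd (map (\<lambda>a. (a, i)) [0..<Suc (delta i)]) = hd (map (\<lambda>a. (a, j)) [0..<Suc (delta j)])" by simp
      then show "i = j" by (simp del: upt_Suc add: hd_map upt_conv_Cons)
    qed
  qed simp
qed (auto simp: distinct_map inj_on_def simp del: upt_Suc)

lemma jac_entry:
  assumes "\<And>i. i < m \<Longrightarrow> cD m delta A q y i \<noteq> 0"
    and "r < length (cdm_states m delta)" "s < length (cdm_states m delta)"
  shows "cdm_jacobian m delta sigma lam A q y $$ (r, s) =
     cJac m delta sigma lam A q y (cdm_states m delta ! r) (cdm_states m delta ! s)"
proof -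
  let ?S = "cdm_states m delta"
  obtain a i where r: "?S ! r = (a, i)" by force
  have "(a, i) \<in> set ?S" using r assms(2) by (metis nth_mem)
  then have "i < m" by (simp add: mem_states)
  show ?thesis unfolding cdm_jacobian_def Let_def using assms(2,3)
    by (simp add: r, intro DERIV_imp_deriv h_deriv assms(1) \<open>i < m\<close>)
qed

lemma jac_carrier: "cdm_jacobian m delta sigma lam A q y \<in> carrier_mat (length (cdm_states m delta)) (length (cdm_states m delta))"
  by (simp add: cdm_jacobian_def Let_def)

lemma sum_states:
  fixes f :: "nat \<times> nat \<Rightarrow> 'b::comm_monoid_add"
  shows "(\<Sum>j<length (cdm_states m delta). f (cdm_states m delta ! j)) = (\<Sum>p\<in>set (cdm_states m delta). f p)"
proof -
  let ?S = "cdm_states m delta"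
  have inj: "inj_on (\<lambda>j. ?S ! j) {..<length ?S}"
    using distinct_states by (simp add: inj_on_def nth_eq_iff_index_eq)
  have im: "(\<lambda>j. ?S ! j) ` {..<length ?S} = set ?S"
    by (auto simp: set_conv_nth)
  show ?thesis using sum.reindex[OF inj, of f] im by simp
qed




definition Vf :: "nat \<Rightarrow> (nat \<Rightarrow> nat) \<Rightarrow> complex vec \<Rightarrow> nat \<times> nat \<Rightarrow> complex" where
  "Vf m delta v p = v $ (THE j. j < length (cdm_states m delta) \<and> cdm_states m delta ! j = p)"

lemma Vf_nth: "j < length (cdm_states m delta) \<Longrightarrow> Vf m delta v (cdm_states m delta ! j) = v $ j"
  unfolding Vf_def
  by (rule arg_cong[where f="\<lambda>j. v $ j"], rule the_equality)
     (auto simp: nth_eq_iff_index_eq distinct_states)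

lemma sum_generic:
  assumes p1: "p1 \<in> set (cdm_states m delta)" and p2: "p2 \<in> set (cdm_states m delta)"
  shows "(\<Sum>p\<in>set (cdm_states m delta). complex_of_real (ka * (\<Sum>k<m. A $$ (i,k) * indf p (delta k, k))
      + kb * indf p p1 + kc * indf p p2) * V p)
    = of_real ka * (\<Sum>k<m. of_real (A $$ (i,k)) * V (delta k, k)) + of_real kb * V p1 + of_real kc * V p2"
proof -
  let ?S = "set (cdm_states m delta)"
  have f: "finite ?S" by simp
  have d: "\<And>p0. p0 \<in> ?S \<Longrightarrow> (\<Sum>p\<in>?S. complex_of_real (indf p p0) * V p) = V p0"
  proof -
    fix p0 assume "p0 \<in> ?S"
    have e: "(\<lambda>p. complex_of_real (indf p p0) * V p) = (\<lambda>p. if p0 = p then V p else 0)"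
      by (auto simp: indf_def)
    show "(\<Sum>p\<in>?S. complex_of_real (indf p p0) * V p) = V p0"
      unfolding e using \<open>p0 \<in> ?S\<close> by simp
  qed
  have "(\<Sum>p\<in>?S. complex_of_real (\<Sum>k<m. A $$ (i,k) * indf p (delta k, k)) * V p)
      = (\<Sum>k<m. of_real (A $$ (i,k)) * (\<Sum>p\<in>?S. complex_of_real (indf p (delta k, k)) * V p))"
    by (simp add: sum_distrib_left sum_distrib_right sum.swap[of _ ?S] mult.assoc)
  also have "\<dots> = (\<Sum>k<m. of_real (A $$ (i,k)) * V (delta k, k))"
    by (rule sum.cong, simp, subst d, auto simp: mem_states)
  finally have s1: "(\<Sum>p\<in>?S. complex_of_real (\<Sum>k<m. A $$ (i,k) * indf p (delta k, k)) * V p)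
      = (\<Sum>k<m. of_real (A $$ (i,k)) * V (delta k, k))" .
  have "(\<Sum>p\<in>?S. complex_of_real (ka * (\<Sum>k<m. A $$ (i,k) * indf p (delta k, k))
      + kb * indf p p1 + kc * indf p p2) * V p)
    = of_real ka * (\<Sum>p\<in>?S. complex_of_real (\<Sum>k<m. A $$ (i,k) * indf p (delta k, k)) * V p)
      + of_real kb * (\<Sum>p\<in>?S. complex_of_real (indf p p1) * V p)
      + of_real kc * (\<Sum>p\<in>?S. complex_of_real (indf p p2) * V p)"
  proof -
    have "\<And>p. complex_of_real (ka * (\<Sum>k<m. A $$ (i,k) * indf p (delta k, k))
      + kb * indf p p1 + kc * indf p p2) * V p =
      of_real ka * (complex_of_real (\<Sum>k<m. A $$ (i,k) * indf p (delta k, k)) * V p)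
      + of_real kb * (complex_of_real (indf p p1) * V p) + of_real kc * (complex_of_real (indf p p2) * V p)"
      by (simp only: of_real_add of_real_mult) (simp add: algebra_simps)
    then show ?thesis by (simp only: sum.distrib sum_distrib_left)
  qed
  then show ?thesis using s1 d[OF p1] d[OF p2] by simp
qed




lemma row_eq:
  assumes D: "\<And>i. i < m \<Longrightarrow> cD m delta A q y i \<noteq> 0"
    and v: "v \<in> carrier_vec (length (cdm_states m delta))"
    and ev: "map_mat complex_of_real (cdm_jacobian m delta sigma lam A q y) *\<^sub>v v = \<mu> \<cdot>\<^sub>v v"
    and r: "r \<in> set (cdm_states m delta)"
  shows "(\<Sum>p\<in>set (cdm_states m delta). complex_of_real (cJac m delta sigma lam A q y r p) * Vf m delta v p)
     = \<mu> * Vf m delta v r"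
proof -
  let ?S = "cdm_states m delta"
  let ?N = "length ?S"
  let ?J = "cdm_jacobian m delta sigma lam A q y"
  obtain j where j: "j < ?N" "?S ! j = r" using r by (metis in_set_conv_nth)
  have dimv: "dim_vec v = ?N" using v by simp
  have "(map_mat complex_of_real ?J *\<^sub>v v) $ j = \<mu> * v $ j" using ev j dimv
    by (metis index_smult_vec(1))
  moreover have "(map_mat complex_of_real ?J *\<^sub>v v) $ j = (\<Sum>l<?N. complex_of_real (?J $$ (j, l)) * v $ l)"
    using j jac_carrier[of m delta sigma lam A q y] dimv
    by (simp add: mult_mat_vec_def scalar_prod_def row_def atLeast0LessThan)
  moreover have "(\<Sum>l<?N. complex_of_real (?J $$ (j, l)) * v $ l)
      = (\<Sum>l<?N. complex_of_real (cJac m delta sigma lam A q y (?S ! j) (?S ! l)) * Vf m delta v (?S ! l))"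
    by (rule sum.cong, simp, simp add: jac_entry[OF D j(1)] Vf_nth)
  moreover have "\<dots> = (\<Sum>p\<in>set ?S. complex_of_real (cJac m delta sigma lam A q y r p) * Vf m delta v p)"
    using sum_states[of "\<lambda>p. complex_of_real (cJac m delta sigma lam A q y r p) * Vf m delta v p" m delta] j
    by simp
  ultimately show ?thesis using Vf_nth[OF j(1), of v] j by simp
qed




context
  fixes m delta sigma lam A q y v \<mu>
  assumes D: "\<And>i. i < m \<Longrightarrow> cD m delta A q y i \<noteq> 0"
    and v: "v \<in> carrier_vec (length (cdm_states m delta))"
    and ev: "map_mat complex_of_real (cdm_jacobian m delta sigma lam A q y) *\<^sub>v v = \<mu> \<cdot>\<^sub>v v"
begin

abbreviation "VV \<equiv> Vf m delta v"
abbreviation "SU i \<equiv> (\<Sum>k<m. complex_of_real (A $$ (i,k)) * VV (delta k, k))"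
abbreviation "gg i \<equiv> cdm_G m lam A q i (cdm_adults m delta y)"
abbreviation "cc i \<equiv> lam i * y (delta i, i) / (q $ i * (cD m delta A q y i)^2)"

lemma shape_eq:
  assumes r: "r \<in> set (cdm_states m delta)" and p1: "p1 \<in> set (cdm_states m delta)" and p2: "p2 \<in> set (cdm_states m delta)"
    and sh: "\<And>p. cJac m delta sigma lam A q y r p = c1 * (\<Sum>k<m. A $$ (snd r,k) * indf p (delta k, k)) + c2 * indf p p1 + c3 * indf p p2"
  shows "\<mu> * VV r = of_real c1 * SU (snd r) + of_real c2 * VV p1 + of_real c3 * VV p2"
  using row_eq[OF D v ev r] sum_generic[OF p1 p2, where ka=c1 and i="snd r" and A=A and kb=c2 and kc=c3 and V=VV] sh by simp

lemma eq0:
  assumes i: "i < m" and d: "delta i > 0"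
  shows "\<mu> * VV (0, i) = - of_real (cc i) * SU i + of_real (gg i) * VV (delta i, i)"
proof -
  have sh: "\<And>p. cJac m delta sigma lam A q y (0, i) p = (- cc i) * (\<Sum>k<m. A $$ (snd (0::nat, i),k) * indf p (delta k, k)) + gg i * indf p (delta i, i) + 0 * indf p (delta i, i)"
    using d by (simp add: cJac_def Let_def divide_inverse mult_ac)
  have "\<mu> * VV (0, i) = of_real (- cc i) * SU (snd (0::nat,i)) + of_real (gg i) * VV (delta i, i) + of_real 0 * VV (delta i, i)"
    by (rule shape_eq[OF _ _ _ sh]) (use i d in \<open>auto simp: mem_states\<close>)
  then show ?thesis by simp
qed

lemma eqa:
  assumes i: "i < m" and a: "0 < a" "a < delta i"
  shows "\<mu> * VV (a, i) = of_real (sigma (a - 1) i) * VV (a - 1, i)"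
proof -
  have "\<mu> * VV (a, i) = of_real 0 * SU (snd (a,i)) + of_real (sigma (a - 1) i) * VV (a - 1, i) + of_real 0 * VV (a - 1, i)"
    by (rule shape_eq) (use i a in \<open>auto simp: mem_states cJac_def Let_def\<close>)
  then show ?thesis by simp
qed

lemma eqd:
  assumes i: "i < m" and d: "delta i > 0"
  shows "\<mu> * VV (delta i, i) = of_real (sigma (delta i - 1) i) * VV (delta i - 1, i) + of_real (sigma (delta i) i) * VV (delta i, i)"
proof -
  have "\<mu> * VV (delta i, i) = of_real 0 * SU (snd (delta i,i)) + of_real (sigma (delta i - 1) i) * VV (delta i - 1, i) + of_real (sigma (delta i) i) * VV (delta i, i)"
    by (rule shape_eq) (use i d in \<open>auto simp: mem_states cJac_def Let_def\<close>)
  then show ?thesis by simp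
qed

lemma eqz:
  assumes i: "i < m" and d: "delta i = 0"
  shows "\<mu> * VV (0, i) = - of_real (cc i) * SU i + of_real (sigma 0 i + gg i) * VV (0, i)"
proof -
  have sh: "\<And>p. cJac m delta sigma lam A q y (0, i) p = (- cc i) * (\<Sum>k<m. A $$ (snd (0::nat, i),k) * indf p (delta k, k)) + (sigma 0 i + gg i) * indf p (0, i) + 0 * indf p (0, i)"
    using d by (simp add: cJac_def Let_def divide_inverse mult_ac distrib_left)
  have "\<mu> * VV (0, i) = of_real (- cc i) * SU (snd (0::nat,i)) + of_real (sigma 0 i + gg i) * VV (0, i) + of_real 0 * VV (0, i)"
    by (rule shape_eq[OF _ _ _ sh]) (use i d in \<open>auto simp: mem_states\<close>)
  then show ?thesis by simp
qed

end




lemma dom_core: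
  fixes P Ui R :: complex and z w a s :: real
  assumes eq: "P * Ui = of_real z * Ui - of_real w * (of_real a * Ui + R)"
    and R: "cmod R \<le> s * cmod Ui" and sa: "s < a" and w: "0 < w" and wa: "w * a \<le> z"
    and P: "cmod P \<ge> z" and U: "Ui \<noteq> 0"
  shows False
proof -
  have e: "(P - of_real (z - w * a)) * Ui = - of_real w * R" using eq by (simp add: algebra_simps)
  have "cmod (P - of_real (z - w * a)) \<ge> cmod P - cmod (of_real (z - w * a) :: complex)"
    by (rule norm_triangle_ineq2)
  moreover have "cmod (of_real (z - w * a) :: complex) = z - w * a" using wa by (simp only: norm_of_real)
  ultimately have "cmod (P - of_real (z - w * a)) \<ge> cmod P - (z - w * a)" by linarith
  then have l: "cmod (P - of_real (z - w * a)) \<ge> w * a" using P by simp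
  have u: "cmod Ui > 0" using U by simp
  have "w * a * cmod Ui \<le> cmod (P - of_real (z - w * a)) * cmod Ui"
    using l u by (simp add: mult_right_mono)
  also have "\<dots> = cmod (- of_real w * R)" using e by (metis norm_mult)
  also have "\<dots> = w * cmod R" using w by (simp add: norm_mult)
  also have "\<dots> \<le> w * (s * cmod Ui)" using R w by simp
  also have "\<dots> < w * (a * cmod Ui)" using sa w u by simp
  finally show False by simp
qed

lemma cmodP:
  fixes \<mu> :: complex and sg :: real
  assumes "cmod \<mu> \<ge> 1" "sg \<ge> 0"
  shows "cmod (\<mu> ^ d * (\<mu> - of_real sg)) \<ge> 1 - sg"
proof -
  have "cmod (\<mu> - of_real sg) \<ge> cmod \<mu> - sg"
    using norm_triangle_ineq2[of \<mu> "of_real sg"] assms(2) by simp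
  moreover have "cmod \<mu> ^ d \<ge> 1" using assms(1) by (simp add: one_le_power)
  then have "1 * cmod (\<mu> - of_real sg) \<le> cmod \<mu> ^ d * cmod (\<mu> - of_real sg)"
    by (intro mult_right_mono) auto
  ultimately have "cmod \<mu> ^ d * cmod (\<mu> - of_real sg) \<ge> 1 - sg"
    using assms by linarith
  then show ?thesis by (simp add: norm_mult norm_power)
qed




context
  fixes m delta sigma lam A q y v \<mu>
  assumes D: "\<And>i. i < m \<Longrightarrow> cD m delta A q y i \<noteq> 0"
    and v: "v \<in> carrier_vec (length (cdm_states m delta))"
    and ev: "map_mat complex_of_real (cdm_jacobian m delta sigma lam A q y) *\<^sub>v v = \<mu> \<cdot>\<^sub>v v"
begin

abbreviation "VV' \<equiv> Vf m delta v"
abbreviation "SU' i \<equiv> (\<Sum>k<m. complex_of_real (A $$ (i,k)) * VV' (delta k, k))"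
abbreviation "gg' i \<equiv> cdm_G m lam A q i (cdm_adults m delta y)"
abbreviation "cc' i \<equiv> lam i * y (delta i, i) / (q $ i * (cD m delta A q y i)^2)"
abbreviation "pp i a \<equiv> (\<Prod>b<a. sigma b i)"

lemma powa:
  assumes i: "i < m"
  shows "a < delta i \<Longrightarrow> \<mu> ^ a * VV' (a, i) = of_real (pp i a) * VV' (0, i)"
proof (induction a)
  case 0 then show ?case by simp
next
  case (Suc a)
  have "\<mu> ^ Suc a * VV' (Suc a, i) = \<mu> ^ a * (\<mu> * VV' (Suc a, i))" by (simp add: algebra_simps)
  also have "\<mu> * VV' (Suc a, i) = of_real (sigma a i) * VV' (a, i)"
    using eqa[OF D v ev i, of "Suc a"] Suc.prems by simp
  also have "\<mu> ^ a * (of_real (sigma a i) * VV' (a, i)) = of_real (sigma a i) * (\<mu> ^ a * VV' (a, i))"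
    by (simp add: algebra_simps)
  also have "\<dots> = of_real (pp i (Suc a)) * VV' (0, i)"
    using Suc by (simp add: algebra_simps)
  finally show ?case .
qed

lemma stepA:
  assumes i: "i < m"
  shows "\<mu> ^ delta i * (\<mu> - of_real (sigma (delta i) i)) * VV' (delta i, i)
    = of_real (pp i (delta i) * gg' i) * VV' (delta i, i) - of_real (pp i (delta i) * cc' i) * SU' i"
proof (cases "delta i")
  case 0
  then show ?thesis using eqz[OF D v ev i 0] by (simp add: algebra_simps)
next
  case (Suc d)
  have dpos: "delta i > 0" using Suc by simp
  have e0: "\<mu> * VV' (0, i) = - of_real (cc' i) * SU' i + of_real (gg' i) * VV' (delta i, i)"
    using eq0[OF D v ev i dpos] .
  have ed: "(\<mu> - of_real (sigma (delta i) i)) * VV' (delta i, i) = of_real (sigma d i) * VV' (d, i)"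
    using eqd[OF D v ev i dpos] Suc by (simp add: algebra_simps)
  have pd: "\<mu> ^ d * VV' (d, i) = of_real (pp i d) * VV' (0, i)"
    using powa[OF i, of d] Suc by simp
  have "\<mu> ^ delta i * (\<mu> - of_real (sigma (delta i) i)) * VV' (delta i, i)
      = \<mu> * \<mu> ^ d * ((\<mu> - of_real (sigma (delta i) i)) * VV' (delta i, i))"
    using Suc by (simp add: algebra_simps)
  also have "\<dots> = of_real (sigma d i) * (\<mu> * (\<mu> ^ d * VV' (d, i)))" unfolding ed by (simp add: algebra_simps)
  also have "\<dots> = of_real (sigma d i * pp i d) * (\<mu> * VV' (0, i))" unfolding pd by (simp add: algebra_simps)
  also have "\<dots> = of_real (pp i (delta i)) * (- of_real (cc' i) * SU' i + of_real (gg' i) * VV' (delta i, i))"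
    unfolding e0 using Suc by (simp add: algebra_simps)
  finally show ?thesis by (simp add: algebra_simps)
qed

end




context
  fixes m delta sigma lam A q y v \<mu>
  assumes D: "\<And>i. i < m \<Longrightarrow> cD m delta A q y i \<noteq> 0"
    and v: "v \<in> carrier_vec (length (cdm_states m delta))"
    and ev: "map_mat complex_of_real (cdm_jacobian m delta sigma lam A q y) *\<^sub>v v = \<mu> \<cdot>\<^sub>v v"
    and sig_pos: "\<And>i a. i < m \<Longrightarrow> a \<le> delta i \<Longrightarrow> 0 < sigma a i"
    and sig_ad: "\<And>i. i < m \<Longrightarrow> sigma (delta i) i < 1"
    and lam_pos: "\<And>i. i < m \<Longrightarrow> lam i > 0"
    and q_pos: "\<And>i. i < m \<Longrightarrow> q $ i > 0"
    and x_pos: "\<And>i. i < m \<Longrightarrow> y (delta i, i) > 0"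
    and A_nonneg: "\<And>i j. i < m \<Longrightarrow> j < m \<Longrightarrow> A $$ (i, j) \<ge> 0"
    and A_dd: "\<And>i. i < m \<Longrightarrow> A $$ (i, i) > (\<Sum>j\<in>{0..<m} - {i}. A $$ (i, j))"
    and Deq: "\<And>i. i < m \<Longrightarrow> cD m delta A q y i = cdm_ltilde delta sigma lam i / cdm_z delta sigma i"
    and lt_z: "\<And>i. i < m \<Longrightarrow> cdm_ltilde delta sigma lam i > cdm_z delta sigma i \<and> cdm_z delta sigma i > 0"
    and mu: "cmod \<mu> \<ge> 1"
begin

lemma pp_pos: "i < m \<Longrightarrow> (\<Prod>b<a. sigma b i) > 0" if "a \<le> delta i" for i a
  using that by (induction a) (auto intro!: mult_pos_pos sig_pos)

lemma gg_eq: "i < m \<Longrightarrow> cdm_G m lam A q i (cdm_adults m delta y) = lam i / cD m delta A q y i"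
  unfolding cdm_G_def cD_def by (auto simp: cdm_adults_def intro!: sum.cong arg_cong[where f="\<lambda>s. lam i / (1 + s / q $ i)"])

lemma pg_eq: "i < m \<Longrightarrow> (\<Prod>b<delta i. sigma b i) * cdm_G m lam A q i (cdm_adults m delta y) = cdm_z delta sigma i"
proof -
  assume i: "i < m"
  have p: "(\<Prod>b<delta i. sigma b i) > 0" using pp_pos[OF order.refl i] .
  have l: "lam i > 0" using lam_pos i .
  have z: "cdm_z delta sigma i > 0" using lt_z i by auto
  have nz: "\<forall>a\<in>{..<delta i}. sigma a i \<noteq> 0"
  proof
    fix a assume "a \<in> {..<delta i}"
    then have "sigma a i > 0" using sig_pos[OF i, of a] by simp
    then show "sigma a i \<noteq> 0" by simp
  qed
  show ?thesis using p l z nz unfolding gg_eq[OF i] Deq[OF i] cdm_ltilde_def by (simp add: field_simps)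
qed

lemma Dpos: "i < m \<Longrightarrow> cD m delta A q y i > 0"
proof -
  assume i: "i < m"
  have "cdm_ltilde delta sigma lam i > 0" "cdm_z delta sigma i > 0" using lt_z[OF i] by auto
  then show ?thesis unfolding Deq[OF i] by simp
qed

lemma wa_le: "i < m \<Longrightarrow> (\<Prod>b<delta i. sigma b i) * (lam i * y (delta i, i) / (q $ i * (cD m delta A q y i)^2)) * A $$ (i, i) \<le> cdm_z delta sigma i"
proof -
  assume i: "i < m"
  let ?x = "y (delta i, i)" and ?D = "cD m delta A q y i" and ?p = "(\<Prod>b<delta i. sigma b i)"
  have p: "?p > 0" using pp_pos[OF order.refl i] .
  have Dp: "?D > 0" using Dpos[OF i] .
  have qp: "q $ i > 0" using q_pos[OF i] .
  have l: "lam i > 0" using lam_pos i .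
  have "A $$ (i,i) * ?x \<le> (\<Sum>k<m. A $$ (i,k) * y (delta k, k))"
    using member_le_sum[of i "{..<m}" "\<lambda>k. A $$ (i,k) * y (delta k, k)"] i A_nonneg x_pos
    by (simp add: less_imp_le)
  then have "A $$ (i,i) * ?x / q $ i \<le> (\<Sum>k<m. A $$ (i,k) * y (delta k, k)) / q $ i"
    using qp by (simp add: divide_right_mono)
  also have "\<dots> \<le> ?D" unfolding cD_def by simp
  finally have r: "A $$ (i,i) * ?x / (q $ i * ?D) \<le> 1" using Dp qp by (simp add: field_simps)
  have "?p * (lam i * y (delta i, i) / (q $ i * (cD m delta A q y i)^2)) * A $$ (i, i) = (?p * lam i / ?D) * (A $$ (i,i) * ?x / (q $ i * ?D))"
    by (simp add: power2_eq_square field_simps)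
  also have "\<dots> \<le> (?p * lam i / ?D) * 1"
    using r p l Dp by (intro mult_left_mono) auto
  also have "\<dots> = cdm_z delta sigma i" using pg_eq[OF i] gg_eq[OF i] by simp
  finally show ?thesis .
qed

lemma U_zero: "\<forall>k<m. Vf m delta v (delta k, k) = 0"
proof (rule ccontr)
  assume nz: "\<not> (\<forall>k<m. Vf m delta v (delta k, k) = 0)"
  let ?U = "\<lambda>k. Vf m delta v (delta k, k)"
  have ne: "{..<m} \<noteq> {}" using nz by auto
  obtain i where i: "i < m" and imax: "\<And>k. k < m \<Longrightarrow> cmod (?U k) \<le> cmod (?U i)"
  proof -
    let ?M = "Max ((\<lambda>k. cmod (?U k)) ` {..<m})"
    have "?M \<in> (\<lambda>k. cmod (?U k)) ` {..<m}" using ne by (intro Max_in) auto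
    then obtain i where "i < m" "cmod (?U i) = ?M" by auto
    moreover have "\<forall>k<m. cmod (?U k) \<le> ?M" by (auto intro: Max_ge)
    ultimately show ?thesis using that by auto
  qed
  have Ui: "?U i \<noteq> 0" using nz imax by force
  let ?R = "\<Sum>k\<in>{0..<m} - {i}. complex_of_real (A $$ (i,k)) * ?U k"
  let ?s = "\<Sum>k\<in>{0..<m} - {i}. A $$ (i,k)"
  have split: "(\<Sum>k<m. complex_of_real (A $$ (i,k)) * Vf m delta v (delta k, k)) = of_real (A $$ (i,i)) * ?U i + ?R"
  proof -
    have e: "{0..<m} - {i} = {..<m} - {i}" by auto
    show ?thesis unfolding e using i by (simp add: sum.remove)
  qed
  have "cmod ?R \<le> (\<Sum>k\<in>{0..<m} - {i}. cmod (complex_of_real (A $$ (i,k)) * ?U k))"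
    by (rule norm_sum)
  also have "\<dots> \<le> (\<Sum>k\<in>{0..<m} - {i}. A $$ (i,k) * cmod (?U i))"
    using i A_nonneg imax by (intro sum_mono) (auto simp: norm_mult intro!: mult_left_mono)
  also have "\<dots> = ?s * cmod (?U i)" by (simp add: sum_distrib_right)
  finally have R: "cmod ?R \<le> ?s * cmod (?U i)" .
  have eq: "(\<mu> ^ delta i * (\<mu> - of_real (sigma (delta i) i))) * ?U i
     = of_real (cdm_z delta sigma i) * ?U i - of_real ((\<Prod>b<delta i. sigma b i) * (lam i * y (delta i, i) / (q $ i * (cD m delta A q y i)^2)))
        * (of_real (A $$ (i,i)) * ?U i + ?R)"
    using stepA[OF D v ev i] pg_eq[OF i] split by simp
  have P: "cmod (\<mu> ^ delta i * (\<mu> - of_real (sigma (delta i) i))) \<ge> cdm_z delta sigma i"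
    using cmodP[OF mu, of "sigma (delta i) i" "delta i"] sig_pos[OF i order.refl] unfolding cdm_z_def by simp
  have w: "(\<Prod>b<delta i. sigma b i) * (lam i * y (delta i, i) / (q $ i * (cD m delta A q y i)^2)) > 0"
    using pp_pos[OF order.refl i] lam_pos[OF i] x_pos[OF i] q_pos[OF i] Dpos[OF i] by simp
  show False
    by (rule dom_core[OF eq R A_dd[OF i] w wa_le[OF i] P Ui])
qed

lemma V_zero: "p \<in> set (cdm_states m delta) \<Longrightarrow> Vf m delta v p = 0"
proof -
  assume p: "p \<in> set (cdm_states m delta)"
  obtain a i where pai: "p = (a, i)" by force
  have i: "i < m" and a: "a \<le> delta i" using p pai by (auto simp: mem_states)
  have U0: "\<forall>k<m. Vf m delta v (delta k, k) = 0" by (rule U_zero)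
  have mu0: "\<mu> \<noteq> 0" using mu by auto
  show ?thesis
  proof (cases "a = delta i")
    case True then show ?thesis using U0 i pai by simp
  next
    case False
    then have ad: "a < delta i" using a by simp
    then have dpos: "delta i > 0" by simp
    have "\<mu> * Vf m delta v (0, i) = 0"
      using eq0[OF D v ev i dpos] U0 i by simp
    then have v0: "Vf m delta v (0, i) = 0" using mu0 by simp
    have "\<mu> ^ a * Vf m delta v (a, i) = 0" using powa[OF D v ev i ad] v0 by simp
    then show ?thesis using mu0 pai by simp
  qed
qed

end




lemma mult_row_sum:
  assumes "A \<in> carrier_mat m m" "dim_vec x = m" "i < m"
  shows "(A *\<^sub>v x) $ i = (\<Sum>k<m. A $$ (i,k) * x $ k)"
  using assms by (simp add: scalar_prod_def atLeast0LessThan row_def)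

lemma inv_A:
  fixes A :: "real mat"
  assumes A_dim: "A \<in> carrier_mat m m"
    and A_nonneg: "\<And>i j. i < m \<Longrightarrow> j < m \<Longrightarrow> A $$ (i, j) \<ge> 0"
    and A_dd: "\<And>i. i < m \<Longrightarrow> A $$ (i, i) > (\<Sum>j\<in>{0..<m} - {i}. A $$ (i, j))"
  shows "invertible_mat A"
proof -
  have "det A \<noteq> 0"
  proof
    assume "det A = 0"
    then obtain v where v: "v \<in> carrier_vec m" "v \<noteq> 0\<^sub>v m" "A *\<^sub>v v = 0\<^sub>v m"
      using det_0_iff_vec_prod_zero[OF A_dim] by auto
    have dv: "dim_vec v = m" using v by simp
    obtain j where j: "j < m" "v $ j \<noteq> 0" using v dv by (metis eq_vecI index_zero_vec)
    have ne: "{..<m} \<noteq> {}" using j by auto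
    obtain i where i: "i < m" and imax: "\<And>k. k < m \<Longrightarrow> \<bar>v $ k\<bar> \<le> \<bar>v $ i\<bar>"
    proof -
      let ?M = "Max ((\<lambda>k. \<bar>v $ k\<bar>) ` {..<m})"
      have "?M \<in> (\<lambda>k. \<bar>v $ k\<bar>) ` {..<m}" using ne by (intro Max_in) auto
      then obtain i where "i < m" "\<bar>v $ i\<bar> = ?M" by auto
      moreover have "\<forall>k<m. \<bar>v $ k\<bar> \<le> ?M" by (auto intro: Max_ge)
      ultimately show ?thesis using that by auto
    qed
    have vi: "\<bar>v $ i\<bar> > 0" using imax[OF j(1)] j by simp
    let ?R = "\<Sum>k\<in>{..<m} - {i}. A $$ (i,k) * v $ k"
    let ?s = "\<Sum>k\<in>{0..<m} - {i}. A $$ (i,k)"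
    have "0 = (A *\<^sub>v v) $ i" using v i by simp
    also have "\<dots> = A $$ (i,i) * v $ i + ?R" using mult_row_sum[OF A_dim dv i] i by (simp add: sum.remove)
    finally have e: "A $$ (i,i) * v $ i = - ?R" by simp
    have "\<bar>?R\<bar> \<le> (\<Sum>k\<in>{..<m} - {i}. \<bar>A $$ (i,k) * v $ k\<bar>)" by (rule sum_abs)
    also have "\<dots> \<le> (\<Sum>k\<in>{..<m} - {i}. A $$ (i,k) * \<bar>v $ i\<bar>)"
      using i A_nonneg imax by (intro sum_mono) (auto simp: abs_mult intro!: mult_left_mono)
    also have "\<dots> = ?s * \<bar>v $ i\<bar>"
    proof -
      have e: "{0..<m} - {i} = {..<m} - {i}" by auto
      show ?thesis unfolding e by (simp add: sum_distrib_right)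
    qed
    also have "\<dots> < A $$ (i,i) * \<bar>v $ i\<bar>" using A_dd[OF i] vi by simp
    also have "\<dots> = \<bar>A $$ (i,i) * v $ i\<bar>" using A_nonneg[OF i i] by (simp add: abs_mult)
    finally show False using e by simp
  qed
  from det_non_zero_imp_unit[OF A_dim this, of "()"]
  obtain B where B: "B \<in> carrier_mat m m" "B * A = 1\<^sub>m m" "A * B = 1\<^sub>m m"
    unfolding Units_def ring_mat_def by auto
  show ?thesis unfolding invertible_mat_def inverts_mat_def using A_dim B by auto
qed




lemma cancel_helper: "(c::real) \<noteq> 0 \<Longrightarrow> c * (a / c) = a" by simp

theorem proposition1:
  fixes m :: nat and delta :: "nat \<Rightarrow> nat" and sigma :: "nat \<Rightarrow> nat \<Rightarrow> real"
    and lam :: "nat \<Rightarrow> real" and A :: "real mat"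
  assumes m: "m \<ge> 1"
    and sig_juv: "\<And>i a. i < m \<Longrightarrow> a < delta i \<Longrightarrow> 0 < sigma a i \<and> sigma a i \<le> 1"
    and sig_ad: "\<And>i. i < m \<Longrightarrow> 0 < sigma (delta i) i \<and> sigma (delta i) i < 1"
    and lam_pos: "\<And>i. i < m \<Longrightarrow> lam i > 0"
    and lt_z: "\<And>i. i < m \<Longrightarrow> cdm_ltilde delta sigma lam i > cdm_z delta sigma i \<and> cdm_z delta sigma i > 0"
    and A_dim: "A \<in> carrier_mat m m"
    and A_nonneg: "\<And>i j. i < m \<Longrightarrow> j < m \<Longrightarrow> A $$ (i, j) \<ge> 0"
    and A_dd: "\<And>i. i < m \<Longrightarrow> A $$ (i, i) > (\<Sum>j\<in>{0..<m} - {i}. A $$ (i, j))"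
  shows "invertible_mat A
    \<and> (\<forall>x. dim_vec x = m \<and> (\<forall>i<m. x $ i > 0) \<longrightarrow>
          (\<exists>!q. dim_vec q = m \<and> (\<forall>i<m. q $ i > 0) \<and>
               A *\<^sub>v x = vec m (\<lambda>i. (cdm_ltilde delta sigma lam i - cdm_z delta sigma i)
                                     / cdm_z delta sigma i * q $ i)))
    \<and> (\<forall>q x y. dim_vec q = m \<and> (\<forall>i<m. q $ i > 0) \<and>
          dim_vec x = m \<and> (\<forall>i<m. x $ i > 0) \<and>
          A *\<^sub>v x = vec m (\<lambda>i. (cdm_ltilde delta sigma lam i - cdm_z delta sigma i)
                                / cdm_z delta sigma i * q $ i) \<and>
          (\<forall>p\<in>set (cdm_states m delta). cdm_h m delta sigma lam A q y p = y p) \<and>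
          (\<forall>i<m. y (delta i, i) = x $ i)
        \<longrightarrow> spectral_radius (map_mat complex_of_real (cdm_jacobian m delta sigma lam A q y)) < 1)"
proof (intro conjI allI impI)
  show "invertible_mat A" by (rule inv_A[OF A_dim A_nonneg A_dd])
next
  let ?lt = "cdm_ltilde delta sigma lam" and ?z = "cdm_z delta sigma"
  fix x :: "real vec"
  assume x: "dim_vec x = m \<and> (\<forall>i<m. x $ i > 0)"
  have Axpos: "(A *\<^sub>v x) $ i > 0" if i: "i < m" for i
  proof -
    have "A $$ (i,i) > 0" using A_dd[OF i] A_nonneg[OF i] by (smt (verit) atLeastLessThan_iff sum_nonneg Diff_iff)
    then have "A $$ (i,i) * x $ i > 0" using x i by simp
    also have "A $$ (i,i) * x $ i \<le> (\<Sum>k<m. A $$ (i,k) * x $ k)"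
      using member_le_sum[of i "{..<m}" "\<lambda>k. A $$ (i,k) * x $ k"] i A_nonneg x
      by (simp add: less_imp_le)
    finally show ?thesis using mult_row_sum[OF A_dim _ i, of x] x by simp
  qed
  have cpos: "(?lt i - ?z i) / ?z i > 0" if "i < m" for i using lt_z[OF that] by simp
  let ?q = "vec m (\<lambda>i. (A *\<^sub>v x) $ i / ((?lt i - ?z i) / ?z i))"
  show "\<exists>!q. dim_vec q = m \<and> (\<forall>i<m. q $ i > 0) \<and>
               A *\<^sub>v x = vec m (\<lambda>i. (?lt i - ?z i) / ?z i * q $ i)"
  proof (rule ex1I[of _ ?q])
    show "dim_vec ?q = m \<and> (\<forall>i<m. ?q $ i > 0) \<and> A *\<^sub>v x = vec m (\<lambda>i. (?lt i - ?z i) / ?z i * ?q $ i)"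
    proof (intro conjI allI impI)
      show "dim_vec ?q = m" by simp
      fix i assume i: "i < m"
      have "(A *\<^sub>v x) $ i > 0" "?z i > 0" "?lt i - ?z i > 0" using Axpos[OF i] lt_z[OF i] by auto
      then show "?q $ i > 0" using i by simp
    next
      show "A *\<^sub>v x = vec m (\<lambda>i. (?lt i - ?z i) / ?z i * ?q $ i)"
      proof (rule eq_vecI)
        fix i assume "i < dim_vec (vec m (\<lambda>i. (?lt i - ?z i) / ?z i * ?q $ i))"
        then have i: "i < m" by simp
        have c: "(?lt i - ?z i) / ?z i \<noteq> 0" using lt_z[OF i] by simp
        have e1: "vec m (\<lambda>i. (?lt i - ?z i) / ?z i * ?q $ i) $ i = (?lt i - ?z i) / ?z i * ?q $ i"
          by (rule index_vec[OF i])
        have e2: "?q $ i = (A *\<^sub>v x) $ i / ((?lt i - ?z i) / ?z i)"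
          by (rule index_vec[OF i])
        show "(A *\<^sub>v x) $ i = vec m (\<lambda>i. (?lt i - ?z i) / ?z i * ?q $ i) $ i"
          unfolding e1 e2 by (rule cancel_helper[OF c, symmetric])
      qed (use A_dim in simp)
    qed
  next
    fix q assume q: "dim_vec q = m \<and> (\<forall>i<m. q $ i > 0) \<and> A *\<^sub>v x = vec m (\<lambda>i. (?lt i - ?z i) / ?z i * q $ i)"
    show "q = ?q"
    proof (rule eq_vecI)
      fix i assume "i < dim_vec ?q"
      then have i: "i < m" by simp
      have qe: "A *\<^sub>v x = vec m (\<lambda>i. (?lt i - ?z i) / ?z i * q $ i)" using q by blast
      have "(A *\<^sub>v x) $ i = vec m (\<lambda>i. (?lt i - ?z i) / ?z i * q $ i) $ i" using qe by (rule arg_cong)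
      also have "\<dots> = (?lt i - ?z i) / ?z i * q $ i" by (rule index_vec[OF i])
      finally have ax: "(A *\<^sub>v x) $ i = (?lt i - ?z i) / ?z i * q $ i" .
      have e2: "?q $ i = (A *\<^sub>v x) $ i / ((?lt i - ?z i) / ?z i)"
        by (rule index_vec[OF i])
      have c: "(?lt i - ?z i) / ?z i \<noteq> 0" using lt_z[OF i] by simp
      show "q $ i = ?q $ i" unfolding e2 ax using c by simp
    qed (use q in simp)
  qed
next
  let ?lt = "cdm_ltilde delta sigma lam" and ?z = "cdm_z delta sigma"
  fix q x y
  assume H: "dim_vec q = m \<and> (\<forall>i<m. q $ i > 0) \<and>
          dim_vec x = m \<and> (\<forall>i<m. x $ i > 0) \<and>
          A *\<^sub>v x = vec m (\<lambda>i. (?lt i - ?z i) / ?z i * q $ i) \<and>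
          (\<forall>p\<in>set (cdm_states m delta). cdm_h m delta sigma lam A q y p = y p) \<and>
          (\<forall>i<m. y (delta i, i) = x $ i)"
  let ?S = "cdm_states m delta"
  let ?N = "length ?S"
  let ?M = "map_mat complex_of_real (cdm_jacobian m delta sigma lam A q y)"
  have Deq: "cD m delta A q y i = ?lt i / ?z i" if i: "i < m" for i
  proof -
    have "(\<Sum>k<m. A $$ (i,k) * y (delta k, k)) = (\<Sum>k<m. A $$ (i,k) * x $ k)" using H by simp
    also have "\<dots> = (A *\<^sub>v x) $ i" using mult_row_sum[OF A_dim _ i, of x] H by simp
    also have "\<dots> = (?lt i - ?z i) / ?z i * q $ i" using H i by simp
    finally have s: "(\<Sum>k<m. A $$ (i,k) * y (delta k, k)) = (?lt i - ?z i) / ?z i * q $ i" .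
    have "q $ i > 0" "?z i > 0" using H i lt_z[OF i] by auto
    then show ?thesis unfolding cD_def s by (simp add: field_simps)
  qed
  have Dnz: "cD m delta A q y i \<noteq> 0" if "i < m" for i
    using Deq[OF that] lt_z[OF that] by simp
  have Mc: "?M \<in> carrier_mat ?N ?N" using jac_carrier[of m delta sigma lam A q y] by simp
  have "(0, 0) \<in> set ?S" using m by (simp add: mem_states)
  then have Npos: "?N > 0" by (metis length_pos_if_in_set)
  obtain \<mu> where sp: "spectral_radius ?M = cmod \<mu>" and eig: "eigenvalue ?M \<mu>"
    using spectral_radius_mem_max(1)[OF Mc Npos] unfolding spectrum_def by auto
  show "spectral_radius ?M < 1"
  proof (rule ccontr)
    assume "\<not> spectral_radius ?M < 1"
    then have mu: "cmod \<mu> \<ge> 1" using sp by simp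
    obtain v where v: "v \<in> carrier_vec ?N" "v \<noteq> 0\<^sub>v ?N" "?M *\<^sub>v v = \<mu> \<cdot>\<^sub>v v"
      using eig Mc unfolding eigenvalue_def eigenvector_def by auto
    have sig_pos: "0 < sigma a i" if "i < m" "a \<le> delta i" for i a
      using sig_juv[OF that(1)] sig_ad[OF that(1)] that(2) by (cases "a = delta i") auto
    have V0: "Vf m delta v p = 0" if "p \<in> set ?S" for p
      by (rule V_zero[OF Dnz v(1) v(3) sig_pos _ lam_pos _ _ A_nonneg A_dd Deq lt_z mu that])
        (use sig_ad H in auto)
    have "v = 0\<^sub>v ?N"
    proof (rule eq_vecI)
      fix j assume "j < dim_vec (0\<^sub>v ?N :: complex vec)"
      then have j: "j < ?N" by simp
      have "v $ j = Vf m delta v (?S ! j)" using Vf_nth[OF j] by simp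
      also have "\<dots> = 0" using V0 j by simp
      finally show "v $ j = 0\<^sub>v ?N $ j" using j by simp
    qed (use v in simp)
    then show False using v by simp
  qed
qed


end
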